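(* Let $\pi$ be a $k$-simple $\mathbf{LKI}_{\mathcal E}$-proof of a sequent $S$. Then there exists a proof schema with end-sequent $S$.
   Context: **Language.** A two-sorted first-order language with sort $\omega$ (natural numbers) and sort $\iota$. It contains the constant function symbols $0:\omega$ and $s:\omega\to\omega$ (we write $t+1$ for $s(t)$), further uninterpreted ("constant") function and predicate symbols, and defined function and predicate symbols. Each defined function symbol $f:\omega\times\tau_1\times\cdots\times\tau_n\to\tau$ comes with two rewrite rules $f(0,\bar x)\to s$ and $f(s(y),\bar x)\to t[f(y,\bar x)]$, where: - $s$ and $t$ do not contain $f$; - $\mathrm{vars}(s)\subseteq\{\bar x\}$ and $\mathrm{vars}(t)\subseteq\{\bar x,y\}$; - every defined symbol $g$ occurring in $s$ or $t$ satisfies $g\prec f$ for a fixed irreflexive order $\prec$ (primitive recursion). Defined predicate symbols are analogous, with formulas as right-hand sides. $\mathcal E$ denotes these rewrite rules read as equations. **Calculi.** $\mathbf{LK}_{\mathcal E}$ is Gentzen's $\mathbf{LK}$ (sequents are pairs of multisets; axioms $A\vdash A$ with $A$ atomic) extended by the rule: from $S[t]$ infer $S[t']$ whenever $\mathcal E\models t=t'$. For a proof symbol $\varphi$, terms $a_1,\dots,a_m$ and a sequent $S(x_1,\dots,x_m)$, a proof link is $(\varphi(a_1,\dots,a_m))$ written above $S(a_1,\dots,a_m)$. It is a $k$-proof link (for a variable $k:\omega$) if $\mathrm{vars}(a_1)\subseteq\{k\}$. $\mathbf{LKS}_{\mathcal E}$ is $\mathbf{LK}_{\mathcal E}$ in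 which proof links may occur as leaves. **Proof schemata.** A proof schema pair for a proof symbol $\psi$ with sequent $S(n,x_1,\dots,x_m)$ (where $n:\omega$) is a pair $(\pi,\nu(k))$ of $\mathbf{LKS}_{\mathcal E}$-proofs of $S(0,\bar x)$ and $S(k+1,\bar x)$ respectively, such that: - $\pi$ contains no proof links; - $\nu(k)$ contains only proof links of the form $(\psi(k,a_1,\dots,a_m))$ above $S(k,a_1,\dots,a_m)$. A proof schema $\Psi=\langle(\pi_1,\nu_1(k)),\dots,(\pi_\alpha,\nu_\alpha(k))\rangle$ is a tuple of proof schema pairs for proof symbols $\psi_1,\dots,\psi_\alpha$, such that the proofs of the $\beta$-th pair may additionally contain $k$-proof links to $\psi_\gamma$ for $\beta<\gamma$. Its end-sequent is the sequent $S(n,\bar x)$ of $\psi_1$. **Induction.** $\mathbf{LKI}_{\mathcal E}$ is $\mathbf{LK}_{\mathcal E}$ (without proof links) extended by the induction rule: from $A(k),\Gamma\vdash\Delta,A(k+1)$ infer $A(0),\Gamma\vdash\Delta,A(t)$, where $k:\omega$ is a variable not occurring in $\Gamma,\Delta,A(0)$ and $t$ is a term of sort $\omega$. An $\mathbf{LKI}_{\mathcal E}$-proof is $k$-simple if in all its induction inferences the eigenvariable is $k$ and $\mathrm{vars}(t)\subseteq\{k\}$. *)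

theory Defs
  imports Main "HOL-Library.Multiset"
begin

section \<open>Syntax of the two-sorted language\<close>

text \<open>Sorts: SOm is the sort omega (natural numbers), SIo is the sort iota.\<close>
datatype srt = SOm | SIo

type_synonym var = "nat \<times> srt"

text \<open>Terms. TZero and TSuc are the constant symbols 0 and s; TFn applies a
  (constant or defined) function symbol.\<close>
datatype 'f trm = TVar var | TZero | TSuc "'f trm" | TFn 'f "'f trm list"

datatype ('f,'p) fm =
    FAtom 'p "'f trm list"
  | FNeg "('f,'p) fm"
  | FConj "('f,'p) fm" "('f,'p) fm"
  | FDisj "('f,'p) fm" "('f,'p) fm"
  | FImp "('f,'p) fm" "('f,'p) fm"
  | FAll var "('f,'p) fm"
  | FEx var "('f,'p) fm"

type_synonym ('f,'p) seq = "('f,'p) fm multiset \<times> ('f,'p) fm multiset"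

text \<open>A language: sorts of function symbols (argument sorts, result sort), sorts of
  predicate symbols, and for defined symbols their two primitive recursive rewrite rules.
  A rule entry (xs, y, r0, rS) for a function symbol f stands for the rules
  f(0,xs) -> r0 and f(s(y),xs) -> rS, where rS = t[f(y,xs)].  Analogously for predicate
  symbols with formula right-hand sides.  Symbols with no entry are constant
  (uninterpreted) symbols.\<close>
record ('f,'p) lang =
  fsig :: "'f \<Rightarrow> srt list \<times> srt"
  psig :: "'p \<Rightarrow> srt list"
  fdef :: "'f \<Rightarrow> (var list \<times> var \<times> 'f trm \<times> 'f trm) option"
  pdef :: "'p \<Rightarrow> (var list \<times> var \<times> ('f,'p) fm \<times> ('f,'p) fm) option"

fun wt :: "('f,'p,'x) lang_scheme \<Rightarrow> 'f trm \<Rightarrow> srt \<Rightarrow> bool" where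
  "wt L (TVar x) s = (snd x = s)"
| "wt L TZero s = (s = SOm)"
| "wt L (TSuc t) s = (s = SOm \<and> wt L t SOm)"
| "wt L (TFn f ts) s = (snd (fsig L f) = s \<and> list_all2 (wt L) ts (fst (fsig L f)))"

fun wff :: "('f,'p,'x) lang_scheme \<Rightarrow> ('f,'p) fm \<Rightarrow> bool" where
  "wff L (FAtom P ts) = list_all2 (wt L) ts (psig L P)"
| "wff L (FNeg A) = wff L A"
| "wff L (FConj A B) = (wff L A \<and> wff L B)"
| "wff L (FDisj A B) = (wff L A \<and> wff L B)"
| "wff L (FImp A B) = (wff L A \<and> wff L B)"
| "wff L (FAll x A) = wff L A"
| "wff L (FEx x A) = wff L A"

definition wf_seq :: "('f,'p,'x) lang_scheme \<Rightarrow> ('f,'p) seq \<Rightarrow> bool" where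
  "wf_seq L S = (\<forall>A \<in># fst S + snd S. wff L A)"

fun fvt :: "'f trm \<Rightarrow> var set" where
  "fvt (TVar x) = {x}"
| "fvt TZero = {}"
| "fvt (TSuc t) = fvt t"
| "fvt (TFn f ts) = (\<Union>t\<in>set ts. fvt t)"

fun fvf :: "('f,'p) fm \<Rightarrow> var set" where
  "fvf (FAtom P ts) = (\<Union>t\<in>set ts. fvt t)"
| "fvf (FNeg A) = fvf A"
| "fvf (FConj A B) = fvf A \<union> fvf B"
| "fvf (FDisj A B) = fvf A \<union> fvf B"
| "fvf (FImp A B) = fvf A \<union> fvf B"
| "fvf (FAll x A) = fvf A - {x}"
| "fvf (FEx x A) = fvf A - {x}"

definition fv_seq :: "('f,'p) seq \<Rightarrow> var set" where
  "fv_seq S = (\<Union>A \<in> set_mset (fst S + snd S). fvf A)"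

fun fsyms :: "'f trm \<Rightarrow> 'f set" where
  "fsyms (TVar x) = {}"
| "fsyms TZero = {}"
| "fsyms (TSuc t) = fsyms t"
| "fsyms (TFn f ts) = insert f (\<Union>t\<in>set ts. fsyms t)"

fun fsyms_f :: "('f,'p) fm \<Rightarrow> 'f set" where
  "fsyms_f (FAtom P ts) = (\<Union>t\<in>set ts. fsyms t)"
| "fsyms_f (FNeg A) = fsyms_f A"
| "fsyms_f (FConj A B) = fsyms_f A \<union> fsyms_f B"
| "fsyms_f (FDisj A B) = fsyms_f A \<union> fsyms_f B"
| "fsyms_f (FImp A B) = fsyms_f A \<union> fsyms_f B"
| "fsyms_f (FAll x A) = fsyms_f A"
| "fsyms_f (FEx x A) = fsyms_f A"

fun psyms :: "('f,'p) fm \<Rightarrow> 'p set" where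
  "psyms (FAtom P ts) = {P}"
| "psyms (FNeg A) = psyms A"
| "psyms (FConj A B) = psyms A \<union> psyms B"
| "psyms (FDisj A B) = psyms A \<union> psyms B"
| "psyms (FImp A B) = psyms A \<union> psyms B"
| "psyms (FAll x A) = psyms A"
| "psyms (FEx x A) = psyms A"

text \<open>Every occurrence of f in the term is exactly f(as) (the hole of a context t[f(as)]).\<close>
fun hole_only_t :: "'f \<Rightarrow> 'f trm list \<Rightarrow> 'f trm \<Rightarrow> bool" where
  "hole_only_t f as (TVar x) = True"
| "hole_only_t f as TZero = True"
| "hole_only_t f as (TSuc t) = hole_only_t f as t"
| "hole_only_t f as (TFn g ts) = (if g = f then ts = as else (\<forall>t\<in>set ts. hole_only_t f as t))"

fun hole_only_f :: "'p \<Rightarrow> 'f trm list \<Rightarrow> ('f,'p) fm \<Rightarrow> bool" where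
  "hole_only_f P as (FAtom Q ts) = (Q = P \<longrightarrow> ts = as)"
| "hole_only_f P as (FNeg A) = hole_only_f P as A"
| "hole_only_f P as (FConj A B) = (hole_only_f P as A \<and> hole_only_f P as B)"
| "hole_only_f P as (FDisj A B) = (hole_only_f P as A \<and> hole_only_f P as B)"
| "hole_only_f P as (FImp A B) = (hole_only_f P as A \<and> hole_only_f P as B)"
| "hole_only_f P as (FAll x A) = hole_only_f P as A"
| "hole_only_f P as (FEx x A) = hole_only_f P as A"

definition dsyms_t :: "('f,'p,'x) lang_scheme \<Rightarrow> 'f trm \<Rightarrow> ('f + 'p) set" where
  "dsyms_t L t = Inl ` {f \<in> fsyms t. fdef L f \<noteq> None}"

definition dsyms_f :: "('f,'p,'x) lang_scheme \<Rightarrow> ('f,'p) fm \<Rightarrow> ('f + 'p) set" where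
  "dsyms_f L A = Inl ` {f \<in> fsyms_f A. fdef L f \<noteq> None} \<union> Inr ` {P \<in> psyms A. pdef L P \<noteq> None}"

text \<open>Well-formedness of the defined symbols: the primitive recursion scheme.\<close>
definition wf_lang :: "('f,'p,'x) lang_scheme \<Rightarrow> bool" where
  "wf_lang L \<longleftrightarrow>
    (\<forall>f xs y r0 rS. fdef L f = Some (xs, y, r0, rS) \<longrightarrow>
        distinct (y # xs) \<and> snd y = SOm \<and> fst (fsig L f) = SOm # map snd xs
      \<and> wt L r0 (snd (fsig L f)) \<and> wt L rS (snd (fsig L f))
      \<and> fvt r0 \<subseteq> set xs \<and> fvt rS \<subseteq> set (y # xs)
      \<and> f \<notin> fsyms r0 \<and> hole_only_t f (TVar y # map TVar xs) rS)
  \<and> (\<forall>P xs y A0 AS. pdef L P = Some (xs, y, A0, AS) \<longrightarrow>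
        distinct (y # xs) \<and> snd y = SOm \<and> psig L P = SOm # map snd xs
      \<and> wff L A0 \<and> wff L AS
      \<and> fvf A0 \<subseteq> set xs \<and> fvf AS \<subseteq> set (y # xs)
      \<and> P \<notin> psyms A0 \<and> hole_only_f P (TVar y # map TVar xs) AS)
  \<and> (\<exists>R :: ('f + 'p) rel. irrefl R \<and> trans R
      \<and> (\<forall>f xs y r0 rS. fdef L f = Some (xs, y, r0, rS) \<longrightarrow>
           (\<forall>g \<in> dsyms_t L r0 \<union> dsyms_t L rS. g \<noteq> Inl f \<longrightarrow> (g, Inl f) \<in> R))
      \<and> (\<forall>P xs y A0 AS. pdef L P = Some (xs, y, A0, AS) \<longrightarrow>
           (\<forall>g \<in> dsyms_f L A0 \<union> dsyms_f L AS. g \<noteq> Inr P \<longrightarrow> (g, Inr P) \<in> R)))"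

fun subt :: "(var \<Rightarrow> 'f trm) \<Rightarrow> 'f trm \<Rightarrow> 'f trm" where
  "subt \<sigma> (TVar x) = \<sigma> x"
| "subt \<sigma> TZero = TZero"
| "subt \<sigma> (TSuc t) = TSuc (subt \<sigma> t)"
| "subt \<sigma> (TFn f ts) = TFn f (map (subt \<sigma>) ts)"

fun subf :: "(var \<Rightarrow> 'f trm) \<Rightarrow> ('f,'p) fm \<Rightarrow> ('f,'p) fm" where
  "subf \<sigma> (FAtom P ts) = FAtom P (map (subt \<sigma>) ts)"
| "subf \<sigma> (FNeg A) = FNeg (subf \<sigma> A)"
| "subf \<sigma> (FConj A B) = FConj (subf \<sigma> A) (subf \<sigma> B)"
| "subf \<sigma> (FDisj A B) = FDisj (subf \<sigma> A) (subf \<sigma> B)"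
| "subf \<sigma> (FImp A B) = FImp (subf \<sigma> A) (subf \<sigma> B)"
| "subf \<sigma> (FAll x A) = FAll x (subf (\<sigma>(x := TVar x)) A)"
| "subf \<sigma> (FEx x A) = FEx x (subf (\<sigma>(x := TVar x)) A)"

fun freefor :: "(var \<Rightarrow> 'f trm) \<Rightarrow> ('f,'p) fm \<Rightarrow> bool" where
  "freefor \<sigma> (FAtom P ts) = True"
| "freefor \<sigma> (FNeg A) = freefor \<sigma> A"
| "freefor \<sigma> (FConj A B) = (freefor \<sigma> A \<and> freefor \<sigma> B)"
| "freefor \<sigma> (FDisj A B) = (freefor \<sigma> A \<and> freefor \<sigma> B)"
| "freefor \<sigma> (FImp A B) = (freefor \<sigma> A \<and> freefor \<sigma> B)"
| "freefor \<sigma> (FAll x A) = ((\<forall>y \<in> fvf (FAll x A). x \<notin> fvt (\<sigma> y)) \<and> freefor (\<sigma>(x := TVar x)) A)"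
| "freefor \<sigma> (FEx x A) = ((\<forall>y \<in> fvf (FEx x A). x \<notin> fvt (\<sigma> y)) \<and> freefor (\<sigma>(x := TVar x)) A)"

definition subs :: "(var \<Rightarrow> 'f trm) \<Rightarrow> ('f,'p) seq \<Rightarrow> ('f,'p) seq" where
  "subs \<sigma> S = (image_mset (subf \<sigma>) (fst S), image_mset (subf \<sigma>) (snd S))"

definition freefor_seq :: "(var \<Rightarrow> 'f trm) \<Rightarrow> ('f,'p) seq \<Rightarrow> bool" where
  "freefor_seq \<sigma> S = (\<forall>A \<in># fst S + snd S. freefor \<sigma> A)"

definition subst_of :: "var list \<Rightarrow> 'f trm list \<Rightarrow> var \<Rightarrow> 'f trm" where
  "subst_of ps as x = (case map_of (zip ps as) x of Some t \<Rightarrow> t | None \<Rightarrow> TVar x)"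

section \<open>Semantics and the equational theory E\<close>

text \<open>Two-sorted structures; the carriers of both sorts are nonempty subsets of a fixed
  countably infinite universe (nat).\<close>
record ('f,'p) struc =
  sdom :: "srt \<Rightarrow> nat set"
  szero :: nat
  ssuc :: "nat \<Rightarrow> nat"
  sfun :: "'f \<Rightarrow> nat list \<Rightarrow> nat"
  spred :: "'p \<Rightarrow> nat list \<Rightarrow> bool"

definition is_struc :: "('f,'p,'x) lang_scheme \<Rightarrow> ('f,'p,'y) struc_scheme \<Rightarrow> bool" where
  "is_struc L M \<longleftrightarrow> (\<forall>s. sdom M s \<noteq> {}) \<and> szero M \<in> sdom M SOm
    \<and> (\<forall>d \<in> sdom M SOm. ssuc M d \<in> sdom M SOm)
    \<and> (\<forall>f ds. list_all2 (\<lambda>d s. d \<in> sdom M s) ds (fst (fsig L f))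
              \<longrightarrow> sfun M f ds \<in> sdom M (snd (fsig L f)))"

definition is_val :: "('f,'p,'y) struc_scheme \<Rightarrow> (var \<Rightarrow> nat) \<Rightarrow> bool" where
  "is_val M v \<longleftrightarrow> (\<forall>x. v x \<in> sdom M (snd x))"

fun evalt :: "('f,'p,'y) struc_scheme \<Rightarrow> (var \<Rightarrow> nat) \<Rightarrow> 'f trm \<Rightarrow> nat" where
  "evalt M v (TVar x) = v x"
| "evalt M v TZero = szero M"
| "evalt M v (TSuc t) = ssuc M (evalt M v t)"
| "evalt M v (TFn f ts) = sfun M f (map (evalt M v) ts)"

fun sat :: "('f,'p,'y) struc_scheme \<Rightarrow> (var \<Rightarrow> nat) \<Rightarrow> ('f,'p) fm \<Rightarrow> bool" where
  "sat M v (FAtom P ts) = spred M P (map (evalt M v) ts)"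
| "sat M v (FNeg A) = (\<not> sat M v A)"
| "sat M v (FConj A B) = (sat M v A \<and> sat M v B)"
| "sat M v (FDisj A B) = (sat M v A \<or> sat M v B)"
| "sat M v (FImp A B) = (sat M v A \<longrightarrow> sat M v B)"
| "sat M v (FAll x A) = (\<forall>d \<in> sdom M (snd x). sat M (v(x := d)) A)"
| "sat M v (FEx x A) = (\<exists>d \<in> sdom M (snd x). sat M (v(x := d)) A)"

definition models_E :: "('f,'p,'x) lang_scheme \<Rightarrow> ('f,'p,'y) struc_scheme \<Rightarrow> bool" where
  "models_E L M \<longleftrightarrow> (\<forall>v. is_val M v \<longrightarrow>
     (\<forall>f xs y r0 rS. fdef L f = Some (xs, y, r0, rS) \<longrightarrow>
        evalt M v (TFn f (TZero # map TVar xs)) = evalt M v r0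
      \<and> evalt M v (TFn f (TSuc (TVar y) # map TVar xs)) = evalt M v rS)
   \<and> (\<forall>P xs y A0 AS. pdef L P = Some (xs, y, A0, AS) \<longrightarrow>
        (sat M v (FAtom P (TZero # map TVar xs)) \<longleftrightarrow> sat M v A0)
      \<and> (sat M v (FAtom P (TSuc (TVar y) # map TVar xs)) \<longleftrightarrow> sat M v AS)))"

definition E_eq :: "('f,'p,'x) lang_scheme \<Rightarrow> 'f trm \<Rightarrow> 'f trm \<Rightarrow> bool" where
  "E_eq L t t' \<longleftrightarrow> (\<forall>(M :: ('f,'p) struc) v. is_struc L M \<and> models_E L M \<and> is_val M v
      \<longrightarrow> evalt M v t = evalt M v t')"

definition E_iff :: "('f,'p,'x) lang_scheme \<Rightarrow> ('f,'p) fm \<Rightarrow> ('f,'p) fm \<Rightarrow> bool" where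
  "E_iff L A A' \<longleftrightarrow> (\<forall>(M :: ('f,'p) struc) v. is_struc L M \<and> models_E L M \<and> is_val M v
      \<longrightarrow> (sat M v A \<longleftrightarrow> sat M v A'))"

inductive repl_t :: "'f trm \<Rightarrow> 'f trm \<Rightarrow> 'f trm \<Rightarrow> 'f trm \<Rightarrow> bool" for t t' where
  rt_refl: "repl_t t t' u u"
| rt_hit: "repl_t t t' t t'"
| rt_suc: "repl_t t t' u u' \<Longrightarrow> repl_t t t' (TSuc u) (TSuc u')"
| rt_fn: "list_all2 (repl_t t t') us us' \<Longrightarrow> repl_t t t' (TFn f us) (TFn f us')"

inductive repl_tf :: "'f trm \<Rightarrow> 'f trm \<Rightarrow> ('f,'p) fm \<Rightarrow> ('f,'p) fm \<Rightarrow> bool" for t t' where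
  rtf_atom: "list_all2 (repl_t t t') us us' \<Longrightarrow> repl_tf t t' (FAtom P us) (FAtom P us')"
| rtf_neg: "repl_tf t t' A A' \<Longrightarrow> repl_tf t t' (FNeg A) (FNeg A')"
| rtf_conj: "repl_tf t t' A A' \<Longrightarrow> repl_tf t t' B B' \<Longrightarrow> repl_tf t t' (FConj A B) (FConj A' B')"
| rtf_disj: "repl_tf t t' A A' \<Longrightarrow> repl_tf t t' B B' \<Longrightarrow> repl_tf t t' (FDisj A B) (FDisj A' B')"
| rtf_imp: "repl_tf t t' A A' \<Longrightarrow> repl_tf t t' B B' \<Longrightarrow> repl_tf t t' (FImp A B) (FImp A' B')"
| rtf_all: "repl_tf t t' A A' \<Longrightarrow> repl_tf t t' (FAll x A) (FAll x A')"
| rtf_ex: "repl_tf t t' A A' \<Longrightarrow> repl_tf t t' (FEx x A) (FEx x A')"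

inductive repl_ff :: "('f,'p) fm \<Rightarrow> ('f,'p) fm \<Rightarrow> ('f,'p) fm \<Rightarrow> ('f,'p) fm \<Rightarrow> bool" for B B' where
  rff_refl: "repl_ff B B' A A"
| rff_hit: "repl_ff B B' B B'"
| rff_neg: "repl_ff B B' A A' \<Longrightarrow> repl_ff B B' (FNeg A) (FNeg A')"
| rff_conj: "repl_ff B B' A A' \<Longrightarrow> repl_ff B B' C C' \<Longrightarrow> repl_ff B B' (FConj A C) (FConj A' C')"
| rff_disj: "repl_ff B B' A A' \<Longrightarrow> repl_ff B B' C C' \<Longrightarrow> repl_ff B B' (FDisj A C) (FDisj A' C')"
| rff_imp: "repl_ff B B' A A' \<Longrightarrow> repl_ff B B' C C' \<Longrightarrow> repl_ff B B' (FImp A C) (FImp A' C')"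
| rff_all: "repl_ff B B' A A' \<Longrightarrow> repl_ff B B' (FAll x A) (FAll x A')"
| rff_ex: "repl_ff B B' A A' \<Longrightarrow> repl_ff B B' (FEx x A) (FEx x A')"

section \<open>The calculus LK_E\<close>

fun is_atom :: "('f,'p) fm \<Rightarrow> bool" where
  "is_atom (FAtom P ts) = True"
| "is_atom _ = False"

inductive lk_rule :: "('f,'p,'x) lang_scheme \<Rightarrow> ('f,'p) seq list \<Rightarrow> ('f,'p) seq \<Rightarrow> bool"
  for L where
  ax: "is_atom A \<Longrightarrow> lk_rule L [] ({#A#}, {#A#})"
| wl: "lk_rule L [(G, D)] (add_mset A G, D)"
| wr: "lk_rule L [(G, D)] (G, add_mset A D)"
| cl: "lk_rule L [(add_mset A (add_mset A G), D)] (add_mset A G, D)"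
| cr: "lk_rule L [(G, add_mset A (add_mset A D))] (G, add_mset A D)"
| cut: "lk_rule L [(G, add_mset A D), (add_mset A G', D')] (G + G', D + D')"
| negl: "lk_rule L [(G, add_mset A D)] (add_mset (FNeg A) G, D)"
| negr: "lk_rule L [(add_mset A G, D)] (G, add_mset (FNeg A) D)"
| conjl1: "lk_rule L [(add_mset A G, D)] (add_mset (FConj A B) G, D)"
| conjl2: "lk_rule L [(add_mset B G, D)] (add_mset (FConj A B) G, D)"
| conjr: "lk_rule L [(G, add_mset A D), (G, add_mset B D)] (G, add_mset (FConj A B) D)"
| disjl: "lk_rule L [(add_mset A G, D), (add_mset B G, D)] (add_mset (FDisj A B) G, D)"
| disjr1: "lk_rule L [(G, add_mset A D)] (G, add_mset (FDisj A B) D)"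
| disjr2: "lk_rule L [(G, add_mset B D)] (G, add_mset (FDisj A B) D)"
| impl: "lk_rule L [(G, add_mset A D), (add_mset B G', D')] (add_mset (FImp A B) (G + G'), D + D')"
| impr: "lk_rule L [(add_mset A G, add_mset B D)] (G, add_mset (FImp A B) D)"
| alll: "wt L t (snd x) \<Longrightarrow> freefor (TVar(x := t)) A \<Longrightarrow>
         lk_rule L [(add_mset (subf (TVar(x := t)) A) G, D)] (add_mset (FAll x A) G, D)"
| allr: "snd a = snd x \<Longrightarrow> freefor (TVar(x := TVar a)) A \<Longrightarrow>
         a \<notin> fv_seq (G, D) \<Longrightarrow> a \<notin> fvf (FAll x A) \<Longrightarrow>
         lk_rule L [(G, add_mset (subf (TVar(x := TVar a)) A) D)] (G, add_mset (FAll x A) D)"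
| exl: "snd a = snd x \<Longrightarrow> freefor (TVar(x := TVar a)) A \<Longrightarrow>
         a \<notin> fv_seq (G, D) \<Longrightarrow> a \<notin> fvf (FEx x A) \<Longrightarrow>
         lk_rule L [(add_mset (subf (TVar(x := TVar a)) A) G, D)] (add_mset (FEx x A) G, D)"
| exr: "wt L t (snd x) \<Longrightarrow> freefor (TVar(x := t)) A \<Longrightarrow>
         lk_rule L [(G, add_mset (subf (TVar(x := t)) A) D)] (G, add_mset (FEx x A) D)"
| eqt: "wt L t s \<Longrightarrow> wt L t' s \<Longrightarrow> E_eq L t t' \<Longrightarrow>
         rel_mset (repl_tf t t') G G' \<Longrightarrow> rel_mset (repl_tf t t') D D' \<Longrightarrow>
         lk_rule L [(G, D)] (G', D')"
| eqf: "E_iff L B B' \<Longrightarrow>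
         rel_mset (repl_ff B B') G G' \<Longrightarrow> rel_mset (repl_ff B B') D D' \<Longrightarrow>
         lk_rule L [(G, D)] (G', D')"

text \<open>The induction rule with eigenvariable k and term t:
  from A(k), G |- D, A(k+1) infer A(0), G |- D, A(t).  The formula A(k) is represented
  by A itself, A(u) by the substitution of u for k.\<close>
definition ind_rule :: "('f,'p,'x) lang_scheme \<Rightarrow> var \<Rightarrow> 'f trm \<Rightarrow> ('f,'p) seq list \<Rightarrow> ('f,'p) seq \<Rightarrow> bool" where
  "ind_rule L k t Ps C \<longleftrightarrow> (\<exists>A G D.
      snd k = SOm \<and> wt L t SOm
    \<and> k \<notin> fv_seq (G, D) \<and> k \<notin> fvf (subf (TVar(k := TZero)) A)
    \<and> freefor (TVar(k := TSuc (TVar k))) A \<and> freefor (TVar(k := t)) A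
    \<and> Ps = [(add_mset A G, add_mset (subf (TVar(k := TSuc (TVar k))) A) D)]
    \<and> C = (add_mset (subf (TVar(k := TZero)) A) G, add_mset (subf (TVar(k := t)) A) D))"

text \<open>Proof trees: an inference node labelled with its conclusion and its subproofs, or a
  proof-link leaf (proof symbol, argument terms, the sequent written below the link).\<close>
datatype ('f,'p) ptree =
    Inf "('f,'p) seq" "('f,'p) ptree list"
  | Lnk nat "'f trm list" "('f,'p) seq"

fun endseq :: "('f,'p) ptree \<Rightarrow> ('f,'p) seq" where
  "endseq (Inf S ps) = S"
| "endseq (Lnk j as S) = S"

text \<open>LKS_E proofs; lok decides which proof links are admissible.\<close>
fun lks_proof :: "('f,'p,'x) lang_scheme \<Rightarrow> (nat \<Rightarrow> 'f trm list \<Rightarrow> ('f,'p) seq \<Rightarrow> bool)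
    \<Rightarrow> ('f,'p) ptree \<Rightarrow> bool" where
  "lks_proof L lok (Inf S ps) =
     (wf_seq L S \<and> lk_rule L (map endseq ps) S \<and> (\<forall>p \<in> set ps. lks_proof L lok p))"
| "lks_proof L lok (Lnk j as S) = (wf_seq L S \<and> lok j as S)"

text \<open>LKI_E proofs (no links); Q restricts eigenvariable and term of induction inferences.\<close>
fun lki_proof :: "('f,'p,'x) lang_scheme \<Rightarrow> (var \<Rightarrow> 'f trm \<Rightarrow> bool) \<Rightarrow> ('f,'p) ptree \<Rightarrow> bool" where
  "lki_proof L Q (Inf S ps) =
     (wf_seq L S
      \<and> (lk_rule L (map endseq ps) S \<or> (\<exists>k t. Q k t \<and> ind_rule L k t (map endseq ps) S))
      \<and> (\<forall>p \<in> set ps. lki_proof L Q p))"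
| "lki_proof L Q (Lnk j as S) = False"

definition ksimple_proof :: "('f,'p,'x) lang_scheme \<Rightarrow> var \<Rightarrow> ('f,'p) ptree \<Rightarrow> bool" where
  "ksimple_proof L k p \<longleftrightarrow> lki_proof L (\<lambda>k' t. k' = k \<and> fvt t \<subseteq> {k}) p"

section \<open>Proof schemata\<close>

text \<open>A proof schema is a list of entries; the i-th entry belongs to the proof symbol i and
  consists of the parameter list (n # xs), the sequent S(n, xs), the proof pi of S(0, xs)
  and the proof nu(k) of S(k+1, xs).\<close>
type_synonym ('f,'p) schema = "(var list \<times> ('f,'p) seq \<times> ('f,'p) ptree \<times> ('f,'p) ptree) list"

definition ps_params :: "('f,'p) schema \<Rightarrow> nat \<Rightarrow> var list" where
  "ps_params \<Psi> j = fst (\<Psi> ! j)"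

definition ps_seq :: "('f,'p) schema \<Rightarrow> nat \<Rightarrow> ('f,'p) seq" where
  "ps_seq \<Psi> j = fst (snd (\<Psi> ! j))"

definition ps_base :: "('f,'p) schema \<Rightarrow> nat \<Rightarrow> ('f,'p) ptree" where
  "ps_base \<Psi> j = fst (snd (snd (\<Psi> ! j)))"

definition ps_step :: "('f,'p) schema \<Rightarrow> nat \<Rightarrow> ('f,'p) ptree" where
  "ps_step \<Psi> j = snd (snd (snd (\<Psi> ! j)))"

definition link_ok :: "('f,'p,'x) lang_scheme \<Rightarrow> ('f,'p) schema \<Rightarrow> nat \<Rightarrow> 'f trm list
    \<Rightarrow> ('f,'p) seq \<Rightarrow> bool" where
  "link_ok L \<Psi> j as S' \<longleftrightarrow> j < length \<Psi>
     \<and> list_all2 (\<lambda>a p. wt L a (snd p)) as (ps_params \<Psi> j)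
     \<and> freefor_seq (subst_of (ps_params \<Psi> j) as) (ps_seq \<Psi> j)
     \<and> S' = subs (subst_of (ps_params \<Psi> j) as) (ps_seq \<Psi> j)"

definition k_link :: "var \<Rightarrow> 'f trm list \<Rightarrow> bool" where
  "k_link k as \<longleftrightarrow> as \<noteq> [] \<and> fvt (hd as) \<subseteq> {k}"

definition pair_ok :: "('f,'p,'x) lang_scheme \<Rightarrow> var \<Rightarrow> ('f,'p) schema \<Rightarrow> nat \<Rightarrow> bool" where
  "pair_ok L k \<Psi> i \<longleftrightarrow>
    (let ps = ps_params \<Psi> i; S = ps_seq \<Psi> i; n = hd ps in
       ps \<noteq> [] \<and> distinct ps \<and> snd n = SOm \<and> fv_seq S \<subseteq> set ps
     \<and> lks_proof L (\<lambda>j as S'. i < j \<and> k_link k as \<and> link_ok L \<Psi> j as S') (ps_base \<Psi> i)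
     \<and> endseq (ps_base \<Psi> i) = subs (TVar(n := TZero)) S
     \<and> lks_proof L (\<lambda>j as S'. ((j = i \<and> as \<noteq> [] \<and> hd as = TVar k) \<or> (i < j \<and> k_link k as))
                              \<and> link_ok L \<Psi> j as S') (ps_step \<Psi> i)
     \<and> freefor_seq (TVar(n := TSuc (TVar k))) S
     \<and> endseq (ps_step \<Psi> i) = subs (TVar(n := TSuc (TVar k))) S)"

definition proof_schema :: "('f,'p,'x) lang_scheme \<Rightarrow> var \<Rightarrow> ('f,'p) schema \<Rightarrow> bool" where
  "proof_schema L k \<Psi> \<longleftrightarrow> \<Psi> \<noteq> [] \<and> snd k = SOm \<and> (\<forall>i < length \<Psi>. pair_ok L k \<Psi> i)"

definition schema_endseq :: "('f,'p) schema \<Rightarrow> ('f,'p) seq" where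
  "schema_endseq \<Psi> = ps_seq \<Psi> 0"

end

theory Submission
  imports Defs
begin

lemma subt_id: "(\<forall>x\<in>fvt t. \<sigma> x = TVar x) \<Longrightarrow> subt \<sigma> t = t"
  by (induction t) (auto intro: map_idI)

lemma subf_id: "(\<forall>x\<in>fvf A. \<sigma> x = TVar x) \<Longrightarrow> subf \<sigma> A = A"
  by (induction A arbitrary: \<sigma>) (auto simp: subt_id intro!: map_idI)

lemma freefor_id: "(\<forall>x\<in>fvf A. \<sigma> x = TVar x) \<Longrightarrow> freefor \<sigma> A"
  by (induction A arbitrary: \<sigma>) auto

lemma subf_TVar[simp]: "subf TVar A = A" by (simp add: subf_id)
lemma freefor_TVar[simp]: "freefor TVar A" by (simp add: freefor_id)

lemma finite_fvt[simp]: "finite (fvt t)" by (induction t) auto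
lemma finite_fvf[simp]: "finite (fvf A)" by (induction A) auto
lemma finite_fv_seq[simp]: "finite (fv_seq S)" by (auto simp: fv_seq_def)

lemma wf_seq_simp: "wf_seq L (G, D) \<longleftrightarrow> (\<forall>A\<in>#G. wff L A) \<and> (\<forall>A\<in>#D. wff L A)"
  by (auto simp: wf_seq_def)

definition lder where "lder L lok S \<longleftrightarrow> (\<exists>p. lks_proof L lok p \<and> endseq p = S)"

lemma ex_list: "(\<forall>S\<in>set Ss. \<exists>p. P p \<and> e p = S) \<Longrightarrow> \<exists>ps. map e ps = Ss \<and> (\<forall>p\<in>set ps. P p)"
proof (induction Ss)
  case Nil then show ?case by auto
next
  case (Cons S Ss)
  then obtain p where "P p" "e p = S" by auto
  moreover from Cons obtain ps where "map e ps = Ss" "\<forall>p\<in>set ps. P p" by auto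
  ultimately show ?case by (intro exI[of _ "p#ps"]) auto
qed

lemma lder_rule: "lk_rule L Ss C \<Longrightarrow> wf_seq L C \<Longrightarrow> (\<forall>S\<in>set Ss. lder L lok S) \<Longrightarrow> lder L lok C"
proof -
  assume a: "lk_rule L Ss C" "wf_seq L C" "\<forall>S\<in>set Ss. lder L lok S"
  from ex_list[OF a(3)[unfolded lder_def]] obtain ps where
    "map endseq ps = Ss" "\<forall>p\<in>set ps. lks_proof L lok p" by blast
  then show ?thesis unfolding lder_def using a by (intro exI[of _ "Inf C ps"]) auto
qed

lemma lder_link: "wf_seq L S \<Longrightarrow> lok j as S \<Longrightarrow> lder L lok S"
  unfolding lder_def by (intro exI[of _ "Lnk j as S"]) auto

lemma lks_mono: "lks_proof L lok p \<Longrightarrow> (\<And>j as S. lok j as S \<Longrightarrow> lok' j as S) \<Longrightarrow> lks_proof L lok' p"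
  by (induction p) auto

lemma lder_mono: "lder L lok S \<Longrightarrow> (\<And>j as S. lok j as S \<Longrightarrow> lok' j as S) \<Longrightarrow> lder L lok' S"
  unfolding lder_def using lks_mono by blast

lemma lder_id: "wff L A \<Longrightarrow> lder L lok ({#A#}, {#A#})"
proof (induction A)
  case (FAtom P ts)
  show ?case by (rule lder_rule[OF lk_rule.ax]) (use FAtom in \<open>auto simp: wf_seq_simp\<close>)
next
  case (FNeg B)
  have 1: "lder L lok ({#}, add_mset (FNeg B) {#B#})"
    by (rule lder_rule[OF lk_rule.negr[where A=B and G="{#}" and D="{#B#}"]])
       (use FNeg in \<open>auto simp: wf_seq_simp\<close>)
  show ?case
    by (rule lder_rule[OF lk_rule.negl[where A=B and G="{#}" and D="{#FNeg B#}"]])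
       (use FNeg 1 in \<open>auto simp: wf_seq_simp add_mset_commute\<close>)
next
  case (FConj A B)
  have 1: "lder L lok ({#FConj A B#}, {#A#})"
    by (rule lder_rule[OF lk_rule.conjl1[where A=A and B=B and G="{#}" and D="{#A#}"]])
       (use FConj in \<open>auto simp: wf_seq_simp\<close>)
  have 2: "lder L lok ({#FConj A B#}, {#B#})"
    by (rule lder_rule[OF lk_rule.conjl2[where A=A and B=B and G="{#}" and D="{#B#}"]])
       (use FConj in \<open>auto simp: wf_seq_simp\<close>)
  show ?case
    by (rule lder_rule[OF lk_rule.conjr[where A=A and B=B and G="{#FConj A B#}" and D="{#}"]])
       (use FConj 1 2 in \<open>auto simp: wf_seq_simp\<close>)
next
  case (FDisj A B)
  have 1: "lder L lok ({#A#}, {#FDisj A B#})"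
    by (rule lder_rule[OF lk_rule.disjr1[where A=A and B=B and G="{#A#}" and D="{#}"]])
       (use FDisj in \<open>auto simp: wf_seq_simp\<close>)
  have 2: "lder L lok ({#B#}, {#FDisj A B#})"
    by (rule lder_rule[OF lk_rule.disjr2[where A=A and B=B and G="{#B#}" and D="{#}"]])
       (use FDisj in \<open>auto simp: wf_seq_simp\<close>)
  show ?case
    by (rule lder_rule[OF lk_rule.disjl[where A=A and B=B and G="{#}" and D="{#FDisj A B#}"]])
       (use FDisj 1 2 in \<open>auto simp: wf_seq_simp\<close>)
next
  case (FImp A B)
  have 1: "lder L lok (add_mset (FImp A B) ({#A#} + {#}), {#} + {#B#})"
    by (rule lder_rule[OF lk_rule.impl[where A=A and B=B and G="{#A#}" and D="{#}" and G'="{#}" and D'="{#B#}"]])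
       (use FImp in \<open>auto simp: wf_seq_simp\<close>)
  show ?case
    by (rule lder_rule[OF lk_rule.impr[where A=A and B=B and G="{#FImp A B#}" and D="{#}"]])
       (use FImp 1 in \<open>auto simp: wf_seq_simp add_mset_commute\<close>)
next
  case (FAll x B)
  have 1: "lder L lok ({#FAll x B#}, {#B#})"
    using lder_rule[OF lk_rule.alll[where t="TVar x" and x=x and A=B and G="{#}" and D="{#B#}"]]
    using FAll by (auto simp: wf_seq_simp)
  show ?case
    using lder_rule[OF lk_rule.allr[where a=x and x=x and A=B and G="{#FAll x B#}" and D="{#}"]]
    using FAll 1 by (auto simp: wf_seq_simp fv_seq_def)
next
  case (FEx x B)
  have 1: "lder L lok ({#B#}, {#FEx x B#})"
    using lder_rule[OF lk_rule.exr[where t="TVar x" and x=x and A=B and G="{#B#}" and D="{#}"]]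
    using FEx by (auto simp: wf_seq_simp)
  show ?case
    using lder_rule[OF lk_rule.exl[where a=x and x=x and A=B and G="{#}" and D="{#FEx x B#}"]]
    using FEx 1 by (auto simp: wf_seq_simp fv_seq_def)
qed

lemma lder_wl: "lder L lok (G, D) \<Longrightarrow> wf_seq L (G + G', D) \<Longrightarrow> lder L lok (G + G', D)"
proof (induction G' rule: multiset_induct)
  case empty then show ?case by simp
next
  case (add a G')
  have "lder L lok (G + G', D)" using add by (auto simp: wf_seq_simp)
  then show ?case
    using lder_rule[OF lk_rule.wl[where G="G+G'" and D=D and A=a]] add.prems by auto
qed

lemma lder_wr: "lder L lok (G, D) \<Longrightarrow> wf_seq L (G, D + D') \<Longrightarrow> lder L lok (G, D + D')"
proof (induction D' rule: multiset_induct)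
  case empty then show ?case by simp
next
  case (add a D')
  have "lder L lok (G, D + D')" using add by (auto simp: wf_seq_simp)
  then show ?case
    using lder_rule[OF lk_rule.wr[where G=G and D="D+D'" and A=a]] add.prems by auto
qed

lemma lder_cl: "lder L lok (G + G + X, Y) \<Longrightarrow> wf_seq L (G + X, Y) \<Longrightarrow> lder L lok (G + X, Y)"
proof (induction G arbitrary: X rule: multiset_induct)
  case empty then show ?case by simp
next
  case (add a G)
  have e: "add_mset a G + add_mset a G + X = add_mset a (add_mset a (G + G + X))" by simp
  have "lder L lok (add_mset a (G + G + X), Y)"
    using lder_rule[OF lk_rule.cl[where G="G+G+X" and D=Y and A=a]] add.prems e
    by (auto simp: wf_seq_simp)
  then have "lder L lok (G + G + add_mset a X, Y)" by simp
  moreover have "wf_seq L (G + add_mset a X, Y)" using add.prems by (auto simp: wf_seq_simp)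
  ultimately have "lder L lok (G + add_mset a X, Y)" using add.IH by blast
  then show ?case by simp
qed

lemma lder_cr: "lder L lok (Y, G + G + X) \<Longrightarrow> wf_seq L (Y, G + X) \<Longrightarrow> lder L lok (Y, G + X)"
proof (induction G arbitrary: X rule: multiset_induct)
  case empty then show ?case by simp
next
  case (add a G)
  have e: "add_mset a G + add_mset a G + X = add_mset a (add_mset a (G + G + X))" by simp
  have "lder L lok (Y, add_mset a (G + G + X))"
    using lder_rule[OF lk_rule.cr[where G=Y and D="G+G+X" and A=a]] add.prems e
    by (auto simp: wf_seq_simp)
  then have "lder L lok (Y, G + G + add_mset a X)" by simp
  moreover have "wf_seq L (Y, G + add_mset a X)" using add.prems by (auto simp: wf_seq_simp)
  ultimately have "lder L lok (Y, G + add_mset a X)" using add.IH by blast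
  then show ?case by simp
qed

lemma concat_split:
  "concat xss = us @ x # vs \<Longrightarrow> \<exists>xs\<in>set xss. \<exists>ys1 ys2 rest. xs = ys1 @ x # ys2 \<and> vs = ys2 @ concat rest"
proof (induction xss arbitrary: us)
  case Nil then show ?case by simp
next
  case (Cons a r)
  then have "a @ concat r = us @ x # vs" by simp
  then obtain w where w: "(a = us @ w \<and> w @ concat r = x # vs) \<or> (a @ w = us \<and> concat r = w @ x # vs)"
    by (auto simp: append_eq_append_conv2)
  then show ?case
  proof
    assume h: "a = us @ w \<and> w @ concat r = x # vs"
    show ?case
    proof (cases w)
      case Nil
      then have "concat r = [] @ x # vs" using h by simp
      then show ?thesis using Cons.IH by fastforce
    next
      case (Cons y w')
      then show ?thesis using h by (intro bexI[of _ a]) auto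
    qed
  next
    assume "a @ w = us \<and> concat r = w @ x # vs"
    then show ?case using Cons.IH by fastforce
  qed
qed

fun ilist :: "('f,'p,'x) lang_scheme \<Rightarrow> ('f,'p) ptree \<Rightarrow> ('f,'p) ptree list" where
  "ilist L (Inf C ps) = (if lk_rule L (map endseq ps) C then [] else [Inf C ps]) @ concat (map (ilist L) ps)"
| "ilist L (Lnk j as C) = []"

lemma ilist_split:
  "ilist L T = us @ Inf C ps # vs \<Longrightarrow> \<not> lk_rule L (map endseq ps) C \<Longrightarrow>
   \<exists>ws. vs = concat (map (ilist L) ps) @ ws"
proof (induction T arbitrary: us vs)
  case (Inf C' ps')
  show ?case
  proof (cases "\<not> lk_rule L (map endseq ps') C' \<and> us = []")
    case True
    then show ?thesis using Inf.prems by auto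
  next
    case False
    then have "concat (map (ilist L) ps') = drop (if lk_rule L (map endseq ps') C' then 0 else 1) us @ Inf C ps # vs"
      using Inf.prems(1) by (cases us) (auto split: if_splits)
    from concat_split[OF this] obtain p ys1 ys2 rest where
      p: "p \<in> set ps'" "ilist L p = ys1 @ Inf C ps # ys2" "vs = ys2 @ concat rest" by auto
    from Inf.IH[OF p(1) p(2) Inf.prems(2)] obtain ws where "ys2 = concat (map (ilist L) ps) @ ws" by blast
    then show ?thesis using p(3) by auto
  qed
qed simp

lemma lki_wf: "lki_proof L Q p \<Longrightarrow> wf_seq L (endseq p)"
  by (cases p) auto

lemma ilist_mem:
  "N \<in> set (ilist L T) \<Longrightarrow> lki_proof L Q T \<Longrightarrow>
   lki_proof L Q N \<and> (\<exists>C ps. N = Inf C ps \<and> \<not> lk_rule L (map endseq ps) C)"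
proof (induction T)
  case (Inf C ps)
  from Inf.prems(1) have "(N = Inf C ps \<and> \<not> lk_rule L (map endseq ps) C) \<or> (\<exists>p\<in>set ps. N \<in> set (ilist L p))"
    by (auto split: if_splits)
  then show ?case
  proof
    assume "N = Inf C ps \<and> \<not> lk_rule L (map endseq ps) C"
    then show ?thesis using Inf.prems(2) by blast
  next
    assume "\<exists>p\<in>set ps. N \<in> set (ilist L p)"
    then obtain p where "p \<in> set ps" "N \<in> set (ilist L p)" by blast
    moreover have "lki_proof L Q p" using Inf.prems(2) \<open>p \<in> set ps\<close> by simp
    ultimately show ?thesis using Inf.IH by blast
  qed
qed simp

definition indw :: "('f,'p,'x) lang_scheme \<Rightarrow> var \<Rightarrow> 'f trm \<Rightarrow> ('f,'p) fm \<Rightarrow> ('f,'p) fm multiset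
   \<Rightarrow> ('f,'p) fm multiset \<Rightarrow> ('f,'p) seq list \<Rightarrow> ('f,'p) seq \<Rightarrow> bool" where
 "indw L k t A G D Ps C \<longleftrightarrow> snd k = SOm \<and> wt L t SOm
    \<and> k \<notin> fv_seq (G, D) \<and> k \<notin> fvf (subf (TVar(k := TZero)) A)
    \<and> freefor (TVar(k := TSuc (TVar k))) A \<and> freefor (TVar(k := t)) A
    \<and> Ps = [(add_mset A G, add_mset (subf (TVar(k := TSuc (TVar k))) A) D)]
    \<and> C = (add_mset (subf (TVar(k := TZero)) A) G, add_mset (subf (TVar(k := t)) A) D)"

lemma ind_rule_indw: "ind_rule L k t Ps C \<longleftrightarrow> (\<exists>A G D. indw L k t A G D Ps C)"
  by (simp add: ind_rule_def indw_def)

fun children :: "('f,'p) ptree \<Rightarrow> ('f,'p) ptree list" where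
  "children (Inf C ps) = ps" | "children (Lnk j as C) = []"

definition idata :: "('f,'p,'x) lang_scheme \<Rightarrow> var \<Rightarrow> ('f,'p) ptree
   \<Rightarrow> 'f trm \<times> ('f,'p) fm \<times> ('f,'p) fm multiset \<times> ('f,'p) fm multiset" where
 "idata L k N = (SOME w. fvt (fst w) \<subseteq> {k} \<and> indw L k (fst w) (fst (snd w)) (fst (snd (snd w)))
      (snd (snd (snd w))) (map endseq (children N)) (endseq N))"

definition iseq :: "('f,'p,'x) lang_scheme \<Rightarrow> var \<Rightarrow> ('f,'p) ptree \<Rightarrow> ('f,'p) seq" where
 "iseq L k N = (case idata L k N of (t,A,G,D) \<Rightarrow> (add_mset (subf (TVar(k:=TZero)) A) G, add_mset A D))"

definition ixs :: "('f,'p,'x) lang_scheme \<Rightarrow> var \<Rightarrow> ('f,'p) ptree \<Rightarrow> var list" where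
 "ixs L k N = (SOME xs. distinct xs \<and> set xs = fv_seq (iseq L k N) - {k})"

definition hdr :: "('f,'p,'x) lang_scheme \<Rightarrow> var \<Rightarrow> ('f,'p) ptree \<Rightarrow> var list \<times> ('f,'p) seq" where
 "hdr L k N = (k # ixs L k N, iseq L k N)"

lemma ixs_spec: "distinct (ixs L k N) \<and> set (ixs L k N) = fv_seq (iseq L k N) - {k}"
proof -
  have "\<exists>xs. distinct xs \<and> set xs = fv_seq (iseq L k N) - {k}"
    using finite_distinct_list[of "fv_seq (iseq L k N) - {k}"] by auto
  then show ?thesis unfolding ixs_def by (rule someI_ex)
qed

lemma idata_spec:
  assumes "lki_proof L (\<lambda>k' t. k' = k \<and> fvt t \<subseteq> {k}) (Inf C ps)" "\<not> lk_rule L (map endseq ps) C"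
  shows "\<exists>t A G D. idata L k (Inf C ps) = (t,A,G,D) \<and> fvt t \<subseteq> {k} \<and> indw L k t A G D (map endseq ps) C"
proof -
  from assms obtain t where t: "fvt t \<subseteq> {k}" "ind_rule L k t (map endseq ps) C" by auto
  then obtain A G D where "indw L k t A G D (map endseq ps) C" by (auto simp: ind_rule_indw)
  then have "\<exists>w. fvt (fst w) \<subseteq> {k} \<and> indw L k (fst w) (fst (snd w)) (fst (snd (snd w)))
      (snd (snd (snd w))) (map endseq (children (Inf C ps))) (endseq (Inf C ps))"
    using t by (intro exI[of _ "(t,A,G,D)"]) auto
  from someI_ex[OF this] show ?thesis unfolding idata_def[symmetric]
    by (cases "idata L k (Inf C ps)") auto
qed

lemma map_of_zip_TVar: "map_of (zip xs (map TVar xs)) x = (if x \<in> set xs then Some (TVar x) else None)"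
  by (induction xs) auto

lemma subst_of_cons: "k \<notin> set xs \<Longrightarrow> subst_of (k # xs) (t # map TVar xs) = TVar(k := t)"
  by (rule ext) (auto simp: subst_of_def map_of_zip_TVar)

lemma image_subf_id: "(\<forall>B\<in>#G. subf \<sigma> B = B) \<Longrightarrow> image_mset (subf \<sigma>) G = G"
  by (induction G) auto

lemma la2_TVar: "list_all2 (\<lambda>a p. wt L a (snd p)) (map TVar xs) xs"
  by (induction xs) auto

definition LOK :: "('f,'p,'x) lang_scheme \<Rightarrow> (var list \<times> ('f,'p) seq) list \<Rightarrow> nat \<Rightarrow> 'f trm list
    \<Rightarrow> ('f,'p) seq \<Rightarrow> bool" where
  "LOK L H j as S' \<longleftrightarrow> j < length H
     \<and> list_all2 (\<lambda>a p. wt L a (snd p)) as (fst (H ! j))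
     \<and> freefor_seq (subst_of (fst (H ! j)) as) (snd (H ! j))
     \<and> S' = subs (subst_of (fst (H ! j)) as) (snd (H ! j))"

definition cont :: "'a list \<Rightarrow> nat \<Rightarrow> 'a list \<Rightarrow> bool" where
  "cont H off xs \<longleftrightarrow> (\<exists>us vs. H = us @ xs @ vs \<and> length us = off)"

lemma cont_app1: "cont H off (xs @ ys) \<Longrightarrow> cont H off xs"
  unfolding cont_def by (metis append.assoc)

lemma cont_app2: "cont H off (xs @ ys) \<Longrightarrow> cont H (off + length xs) ys"
  unfolding cont_def by (metis append.assoc length_append)

lemma cont_nth: "cont H off (x # ys) \<Longrightarrow> off < length H \<and> H ! off = x"
  unfolding cont_def by auto

lemma cont_children:
  assumes "\<And>p off. p \<in> set ps \<Longrightarrow> cont H off (map h (il p)) \<Longrightarrow> lder L (lokf off) (e p)"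
  and mono: "\<And>off off' j as S. off \<le> off' \<Longrightarrow> lokf off' j as S \<Longrightarrow> lokf off j as S"
  and "cont H off (map h (concat (map il ps)))"
  shows "\<forall>p\<in>set ps. lder L (lokf off) (e p)"
  using assms(1,3)
proof (induction ps arbitrary: off)
  case Nil then show ?case by simp
next
  case (Cons p ps)
  have c: "cont H off (map h (il p) @ map h (concat (map il ps)))" using Cons.prems(2) by simp
  have 1: "lder L (lokf off) (e p)" using Cons.prems(1)[OF _ cont_app1[OF c]] by simp
  have "\<forall>q\<in>set ps. lder L (lokf (off + length (map h (il p)))) (e q)"
    using Cons.IH[OF _ cont_app2[OF c]] Cons.prems(1) by auto
  then have "\<forall>q\<in>set ps. lder L (lokf off) (e q)"
  proof (intro ballI)
    fix q assume "\<forall>q\<in>set ps. lder L (lokf (off + length (map h (il p)))) (e q)" "q \<in> set ps"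
    then have "lder L (lokf (off + length (map h (il p)))) (e q)" by blast
    then show "lder L (lokf off) (e q)" by (rule lder_mono) (rule mono[OF le_add1])
  qed
  then show ?case using 1 by simp
qed

lemma trans_lemma:
  assumes "lki_proof L (\<lambda>k' t. k' = k \<and> fvt t \<subseteq> {k}) T" "cont H off (map (hdr L k) (ilist L T))"
  shows "lder L (\<lambda>j as S'. off \<le> j \<and> k_link k as \<and> LOK L H j as S') (endseq T)"
  using assms
proof (induction T arbitrary: off)
  case (Lnk j as C) then show ?case by simp
next
  case (Inf C ps)
  show ?case
  proof (cases "lk_rule L (map endseq ps) C")
    case True
    have c: "cont H off (map (hdr L k) (concat (map (ilist L) ps)))" using Inf.prems True by simp
    have "\<forall>p\<in>set ps. lder L (\<lambda>j as S'. off \<le> j \<and> k_link k as \<and> LOK L H j as S') (endseq p)"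
      by (rule cont_children[where il="ilist L" and h="hdr L k", OF _ _ c])
         (use Inf in auto)
    then show ?thesis using lder_rule[OF True] Inf.prems(1) by auto
  next
    case False
    from idata_spec[OF Inf.prems(1) False] obtain t A G D where
      d: "idata L k (Inf C ps) = (t,A,G,D)" "fvt t \<subseteq> {k}" "indw L k t A G D (map endseq ps) C" by blast
    have "cont H off (hdr L k (Inf C ps) # map (hdr L k) (concat (map (ilist L) ps)))"
      using Inf.prems(2) False by simp
    from cont_nth[OF this] have h: "off < length H" "H ! off = hdr L k (Inf C ps)" by auto
    define xs where "xs = ixs L k (Inf C ps)"
    have isq: "iseq L k (Inf C ps) = (add_mset (subf (TVar(k:=TZero)) A) G, add_mset A D)"
      using d by (simp add: iseq_def)
    have xs: "distinct xs" "set xs = fv_seq (iseq L k (Inf C ps)) - {k}"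
      using ixs_spec[of L k "Inf C ps"] unfolding xs_def by auto
    have H: "fst (H ! off) = k # xs" "snd (H ! off) = (add_mset (subf (TVar(k:=TZero)) A) G, add_mset A D)"
      using h isq by (auto simp: hdr_def xs_def)
    have so: "subst_of (k # xs) (t # map TVar xs) = TVar(k := t)"
      using xs by (intro subst_of_cons) auto
    have ind: "snd k = SOm" "wt L t SOm" "k \<notin> fv_seq (G, D)" "k \<notin> fvf (subf (TVar(k := TZero)) A)"
      "freefor (TVar(k := t)) A"
      "C = (add_mset (subf (TVar(k := TZero)) A) G, add_mset (subf (TVar(k := t)) A) D)"
      using d(3) by (auto simp: indw_def)
    have gd: "\<forall>B\<in>#G. k \<notin> fvf B" "\<forall>B\<in>#D. k \<notin> fvf B" using ind(3) by (auto simp: fv_seq_def)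
    have idk: "\<And>B. k \<notin> fvf B \<Longrightarrow> \<forall>x\<in>fvf B. (TVar(k := t)) x = TVar x" by auto
    have lok: "LOK L H off (t # map TVar xs) C"
      unfolding LOK_def H so using h(1) ind gd la2_TVar[of L xs]
      by (auto simp: freefor_seq_def subs_def subf_id idk freefor_id
          intro!: image_subf_id[symmetric])
    show ?thesis
      by (rule lder_link[where j=off and as="t # map TVar xs"])
         (use Inf.prems(1) lok d(2) in \<open>auto simp: k_link_def\<close>)
  qed
qed

lemma subs_id: "(\<forall>x\<in>fv_seq S. \<sigma> x = TVar x) \<Longrightarrow> subs \<sigma> S = S"
  by (cases S) (auto simp: subs_def fv_seq_def intro!: image_subf_id subf_id)

lemma freefor_seq_id: "(\<forall>x\<in>fv_seq S. \<sigma> x = TVar x) \<Longrightarrow> freefor_seq \<sigma> S"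
  by (cases S) (auto simp: freefor_seq_def fv_seq_def intro!: freefor_id)

definition goodh :: "('f,'p,'x) lang_scheme \<Rightarrow> var \<Rightarrow> (var list \<times> ('f,'p) seq) list \<Rightarrow> nat \<Rightarrow> bool" where
 "goodh L k H i \<longleftrightarrow> (let ps = fst (H ! i); S = snd (H ! i); n = hd ps in
   ps \<noteq> [] \<and> distinct ps \<and> snd n = SOm \<and> fv_seq S \<subseteq> set ps
   \<and> lder L (\<lambda>j as S'. i < j \<and> k_link k as \<and> LOK L H j as S') (subs (TVar(n := TZero)) S)
   \<and> freefor_seq (TVar(n := TSuc (TVar k))) S
   \<and> lder L (\<lambda>j as S'. ((j = i \<and> as \<noteq> [] \<and> hd as = TVar k) \<or> (i < j \<and> k_link k as)) \<and> LOK L H j as S')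
        (subs (TVar(n := TSuc (TVar k))) S))"

lemma pair0:
  assumes lki: "lki_proof L (\<lambda>k' t. k' = k \<and> fvt t \<subseteq> {k}) \<pi>" and e: "endseq \<pi> = S"
    and sk: "snd k = SOm" and H: "H = (n # xs0, S) # map (hdr L k) (ilist L \<pi>)"
    and n: "n \<notin> fv_seq S" "snd n = SOm" and xs0: "distinct xs0" "set xs0 = fv_seq S"
  shows "goodh L k H 0"
proof -
  have idn: "\<And>u. \<forall>x\<in>fv_seq S. (TVar(n := u)) x = TVar x" using n by auto
  have wf: "wf_seq L S" using lki_wf[OF lki] e by simp
  have c: "cont H 1 (map (hdr L k) (ilist L \<pi>))" unfolding cont_def H
    by (intro exI[of _ "[(n # xs0, S)]"] exI[of _ "[]"]) simp
  have b: "lder L (\<lambda>j as S'. 0 < j \<and> k_link k as \<and> LOK L H j as S') S"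
    using trans_lemma[OF lki c] e by (auto elim!: lder_mono)
  have nx: "n \<notin> set xs0" using n xs0 by auto
  have h0: "fst (H!0) = n # xs0" "snd (H!0) = S" using H by auto
  have lok: "LOK L H 0 (TVar k # map TVar xs0) S"
    unfolding LOK_def h0 subst_of_cons[OF nx, of "TVar k"] using H la2_TVar[of L xs0] sk n(2)
    by (auto simp: subs_id[OF idn] freefor_seq_id[OF idn])
  have st: "lder L (\<lambda>j as S'. ((j = 0 \<and> as \<noteq> [] \<and> hd as = TVar k) \<or> (0 < j \<and> k_link k as)) \<and> LOK L H j as S') S"
    by (rule lder_link[where j=0 and as="TVar k # map TVar xs0"]) (use wf lok in auto)
  have ids: "subs (TVar(n := u)) S = S" "freefor_seq (TVar(n := u)) S" for u
    by (rule subs_id[OF idn], rule freefor_seq_id[OF idn])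
  show ?thesis unfolding goodh_def Let_def using H b st n xs0 nx
    by (auto simp: ids)
qed

lemma ind_pair:
  assumes lki: "lki_proof L (\<lambda>k' t. k' = k \<and> fvt t \<subseteq> {k}) \<pi>"
    and sk: "snd k = SOm" and H: "H = h0 # map (hdr L k) (ilist L \<pi>)"
    and m: "m < length (ilist L \<pi>)"
  shows "goodh L k H (Suc m)"
proof -
  define N where "N = ilist L \<pi> ! m"
  have Nin: "N \<in> set (ilist L \<pi>)" using m by (simp add: N_def)
  from ilist_mem[OF Nin lki] obtain C ps where
    N: "lki_proof L (\<lambda>k' t. k' = k \<and> fvt t \<subseteq> {k}) N" "N = Inf C ps" "\<not> lk_rule L (map endseq ps) C"
    by blast
  from idata_spec[OF N(1)[unfolded N(2)] N(3)] obtain t A G D where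
    d: "idata L k (Inf C ps) = (t,A,G,D)" "fvt t \<subseteq> {k}" "indw L k t A G D (map endseq ps) C" by blast
  define A0 where "A0 = subf (TVar(k := TZero)) A"
  define Ak1 where "Ak1 = subf (TVar(k := TSuc (TVar k))) A"
  have ind: "k \<notin> fv_seq (G, D)" "k \<notin> fvf A0"
      "freefor (TVar(k := TSuc (TVar k))) A"
      "map endseq ps = [(add_mset A G, add_mset Ak1 D)]"
      "C = (add_mset A0 G, add_mset (subf (TVar(k := t)) A) D)"
      using d(3) by (auto simp: indw_def A0_def Ak1_def)
  obtain p where p: "ps = [p]" "endseq p = (add_mset A G, add_mset Ak1 D)"
    using ind(4) by (cases ps) auto
  have lkip: "lki_proof L (\<lambda>k' t. k' = k \<and> fvt t \<subseteq> {k}) p" using N p by simp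
  have wfC: "wf_seq L C" using lki_wf[OF N(1)] N(2) by simp
  have wfp: "wf_seq L (endseq p)" using lki_wf[OF lkip] .
  have gd: "\<forall>B\<in>#G. k \<notin> fvf B" "\<forall>B\<in>#D. k \<notin> fvf B" using ind(1) by (auto simp: fv_seq_def)
  have wff: "wff L A0" "wff L A" "\<forall>B\<in>#G. wff L B" "\<forall>B\<in>#D. wff L B"
    using wfC wfp ind(5) p(2) by (auto simp: wf_seq_simp)
  define xs where "xs = ixs L k N"
  have xs: "distinct xs" "set xs = fv_seq (iseq L k N) - {k}"
    using ixs_spec[of L k N] unfolding xs_def by auto
  have isq: "iseq L k N = (add_mset A0 G, add_mset A D)"
    using d N(2) by (simp add: iseq_def A0_def)
  have Hi: "H ! Suc m = (k # xs, (add_mset A0 G, add_mset A D))" "Suc m < length H"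
    using H m isq by (auto simp: hdr_def xs_def N_def)
  have kx: "k \<notin> set xs" using xs by auto
  have IL: "ilist L \<pi> = take m (ilist L \<pi>) @ N # drop (Suc m) (ilist L \<pi>)"
    unfolding N_def by (rule id_take_nth_drop[OF m])
  from ilist_split[OF IL[unfolded N(2)] N(3)] obtain ws where
    ws: "drop (Suc m) (ilist L \<pi>) = ilist L p @ ws" using p by auto
  obtain pre where pre: "ilist L \<pi> = pre @ N # ilist L p @ ws" "length pre = m"
  proof
    have "take m (ilist L \<pi>) @ N # drop (Suc m) (ilist L \<pi>) = take m (ilist L \<pi>) @ N # ilist L p @ ws"
      by (simp only: ws)
    with IL show "ilist L \<pi> = take m (ilist L \<pi>) @ N # ilist L p @ ws" by (rule trans)
    show "length (take m (ilist L \<pi>)) = m" using m by simp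
  qed
  have c: "cont H (Suc (Suc m)) (map (hdr L k) (ilist L p))" unfolding cont_def
    by (intro exI[of _ "h0 # map (hdr L k) pre @ [hdr L k N]"] exI[of _ "map (hdr L k) ws"])
       (simp add: H pre)
  have idk: "\<And>u B. k \<notin> fvf B \<Longrightarrow> \<forall>x\<in>fvf B. (TVar(k := u)) x = TVar x" by auto
  have sid: "\<And>u B. k \<notin> fvf B \<Longrightarrow> subf (TVar(k:=u)) B = B" using subf_id idk by blast
  have imG: "\<And>u. image_mset (subf (TVar(k:=u))) G = G" "\<And>u. image_mset (subf (TVar(k:=u))) D = D"
    using gd by (auto intro!: image_subf_id sid)
  have fid: "\<And>u B. k \<notin> fvf B \<Longrightarrow> freefor (TVar(k:=u)) B" using freefor_id idk by blast
  let ?S = "(add_mset A0 G, add_mset A D)"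
  have base: "subs (TVar(k := TZero)) ?S = (add_mset A0 G, add_mset A0 D)"
    using ind(2) by (simp add: subs_def imG sid A0_def[symmetric])
  have stepS: "subs (TVar(k := TSuc (TVar k))) ?S = (add_mset A0 G, add_mset Ak1 D)"
    using ind(2) by (simp add: subs_def imG sid Ak1_def[symmetric])
  have ff: "freefor_seq (TVar(k := TSuc (TVar k))) ?S"
    using ind(2,3) gd by (auto simp: freefor_seq_def fid)
  have b1: "lder L lok ({#A0#}, {#A0#})" for lok using lder_id wff(1) by blast
  have b2: "lder L lok ({#A0#} + G, {#A0#})" for lok
    by (rule lder_wl[OF b1]) (use wff in \<open>auto simp: wf_seq_simp\<close>)
  have b3: "lder L lok ({#A0#} + G, {#A0#} + D)" for lok
    by (rule lder_wr[OF b2]) (use wff in \<open>auto simp: wf_seq_simp\<close>)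
  have bb: "lder L lok (add_mset A0 G, add_mset A0 D)" for lok using b3[of lok] by simp
  let ?lok = "\<lambda>j as S'. ((j = Suc m \<and> as \<noteq> [] \<and> hd as = TVar k) \<or> (Suc m < j \<and> k_link k as)) \<and> LOK L H j as S'"
  have lok: "LOK L H (Suc m) (TVar k # map TVar xs) ?S"
  proof -
    have so: "subst_of (k # xs) (TVar k # map TVar xs) = TVar" using subst_of_cons[OF kx, of "TVar k"] by simp
    have "subs TVar ?S = ?S" "freefor_seq TVar ?S" by (rule subs_id, simp, rule freefor_seq_id, simp)
    then show ?thesis unfolding LOK_def Hi(1) fst_conv snd_conv so using Hi(2) la2_TVar[of L xs] sk by auto
  qed
  have s1: "lder L ?lok ?S"
    by (rule lder_link[where j="Suc m" and as="TVar k # map TVar xs"]) (use wff lok in \<open>auto simp: wf_seq_simp\<close>)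
  have s2: "lder L ?lok (add_mset A G, add_mset Ak1 D)"
    using trans_lemma[OF lkip c] p(2) by (auto elim!: lder_mono)
  have wfk: "wff L Ak1" using wfp p(2) by (auto simp: wf_seq_simp)
  have s3: "lder L ?lok (add_mset A0 G + G, D + add_mset Ak1 D)"
    by (rule lder_rule[OF lk_rule.cut[where G="add_mset A0 G" and A=A and D=D and G'=G and D'="add_mset Ak1 D"]])
       (use s1 s2 wff wfk in \<open>auto simp: wf_seq_simp\<close>)
  have s4: "lder L ?lok (G + {#A0#}, D + add_mset Ak1 D)"
    by (rule lder_cl) (use s3 wff wfk in \<open>auto simp: wf_seq_simp add.commute add.left_commute\<close>)
  have s5: "lder L ?lok (G + {#A0#}, D + {#Ak1#})"
    by (rule lder_cr) (use s4 wff wfk in \<open>auto simp: wf_seq_simp add.commute add.left_commute\<close>)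
  have ss: "lder L ?lok (add_mset A0 G, add_mset Ak1 D)" using s5 by simp
  have fvs: "fv_seq ?S \<subseteq> set (k # xs)" using xs isq by auto
  show ?thesis unfolding goodh_def Let_def Hi(1) using base stepS ff bb ss fvs xs kx sk
    by auto
qed

theorem mainTheorem6:
  fixes L :: "('f,'p) lang" and k :: var and \<pi> :: "('f,'p) ptree" and S :: "('f,'p) seq"
  assumes "wf_lang L"
    and "snd k = SOm"
    and "ksimple_proof L k \<pi>"
    and "endseq \<pi> = S"
  shows "\<exists>\<Psi>. proof_schema L k \<Psi> \<and> schema_endseq \<Psi> = S"
proof -
  have lki: "lki_proof L (\<lambda>k' t. k' = k \<and> fvt t \<subseteq> {k}) \<pi>" using assms(3) by (simp add: ksimple_proof_def)
  obtain m0 where m0: "(m0, SOm) \<notin> fv_seq S"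
  proof -
    have "finite (fst ` fv_seq S)" by simp
    then obtain a where "a \<notin> fst ` fv_seq S" using ex_new_if_finite[OF infinite_UNIV_nat] by blast
    then show ?thesis using that by (metis fst_conv image_eqI)
  qed
  define n where "n = (m0, SOm)"
  obtain xs0 where xs0: "distinct xs0" "set xs0 = fv_seq S"
    using finite_distinct_list[of "fv_seq S"] by auto
  define H where "H = (n # xs0, S) # map (hdr L k) (ilist L \<pi>)"
  have good: "goodh L k H i" if "i < length H" for i
  proof (cases i)
    case 0 then show ?thesis using pair0[OF lki assms(4) assms(2) H_def] m0 xs0 by (simp add: n_def)
  next
    case (Suc m) then show ?thesis using ind_pair[OF lki assms(2) H_def] that by (simp add: H_def)
  qed
  define lb where "lb i = (\<lambda>j as S'. i < j \<and> k_link k as \<and> LOK L H j as S')" for i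
  define ls where "ls i = (\<lambda>j as S'. ((j = i \<and> as \<noteq> [] \<and> hd as = TVar k) \<or> (i < j \<and> k_link k as)) \<and> LOK L H j as S')" for i
  define eb where "eb i = subs (TVar(hd (fst (H!i)) := TZero)) (snd (H!i))" for i
  define es where "es i = subs (TVar(hd (fst (H!i)) := TSuc (TVar k))) (snd (H!i))" for i
  define \<Psi> where "\<Psi> = map (\<lambda>i. (fst (H!i), snd (H!i), SOME p. lks_proof L (lb i) p \<and> endseq p = eb i,
       SOME p. lks_proof L (ls i) p \<and> endseq p = es i)) [0..<length H]"
  have len: "length \<Psi> = length H" by (simp add: \<Psi>_def)
  have comp: "ps_params \<Psi> i = fst (H!i)" "ps_seq \<Psi> i = snd (H!i)"
    "ps_base \<Psi> i = (SOME p. lks_proof L (lb i) p \<and> endseq p = eb i)"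
    "ps_step \<Psi> i = (SOME p. lks_proof L (ls i) p \<and> endseq p = es i)" if "i < length H" for i
    using that by (simp_all add: \<Psi>_def ps_params_def ps_seq_def ps_base_def ps_step_def)
  have lk: "link_ok L \<Psi> = LOK L H" by (intro ext) (auto simp: link_ok_def LOK_def len comp)
  have pok: "pair_ok L k \<Psi> i" if i: "i < length H" for i
  proof -
    have g: "goodh L k H i" using good[OF i] .
    have "lder L (lb i) (eb i)" using g by (simp add: goodh_def Let_def lb_def eb_def)
    then have b: "lks_proof L (lb i) (ps_base \<Psi> i) \<and> endseq (ps_base \<Psi> i) = eb i"
      unfolding comp(3)[OF i] lder_def by (rule someI_ex)
    have "lder L (ls i) (es i)" using g by (simp add: goodh_def Let_def ls_def es_def)
    then have s: "lks_proof L (ls i) (ps_step \<Psi> i) \<and> endseq (ps_step \<Psi> i) = es i"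
      unfolding comp(4)[OF i] lder_def by (rule someI_ex)
    show ?thesis using g b s unfolding pair_ok_def Let_def comp(1,2)[OF i] lk goodh_def
      by (simp add: lb_def ls_def eb_def es_def)
  qed
  have "proof_schema L k \<Psi>"
    unfolding proof_schema_def using len pok assms(2) by (auto simp: H_def)
  moreover have "schema_endseq \<Psi> = S"
    unfolding schema_endseq_def using comp(2)[of 0] by (simp add: H_def)
  ultimately show ?thesis by blast
qed

end
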